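(* Let $G$ be a digraph, $k\in\mathbb N$, let $T\subseteq V(G)$ be a set of at most $k+1$ vertices such that every non-trivial strong component of $G-T$ is $1$-out-regular, and let $Z\subseteq V(G)\setminus T$ be such that $G[Z\cup T]$ contains no subdigraph in $\mathcal F$. Let $G'=\mathsf{torso}(G,Z)$. Then for every $S\subseteq V(G)\setminus(Z\cup T)$, the digraph $G-S$ contains a subdigraph in $\mathcal F$ if and only if $G'-S$ contains a subdigraph in $\mathcal F_{\mathsf{bad}}$.
   Context: Digraphs may have multiple arcs. A digraph is \emph{strong} if it consists of a single vertex (then it is \emph{trivial}), or if for every two distinct vertices $u,v$ there is a directed path from $u$ to $v$; a strong component is an inclusion-maximal strong induced subdigraph. A strong component is \emph{1-out-regular} if each of its vertices has out-degree exactly $1$ in it. $\mathcal F$ denotes the collection of non-trivial strong subdigraphs of $G$ that are not a simple directed cycle (so a set $S$ meets every member of $\mathcal F$ present in $G$ iff every non-trivial strong component of $G-S$ is 1-out-regular). The digraph $\mathsf{torso}(G,Z)$ has vertex set $V(G)\setminus Z$; for $u,v\notin Z$ (possibly $u=v$, giving a self-loop) it contains an arc $(u,v)$ whenever $G$ has a $u\to v$ path (closed if $u=v$) of length at least $1$ all of whose internal vertices lie in $Z$. Such an arc is \emph{good} if this path $P$ is unique and there is no cycle $O$ in $G[Z]$ sharing a vertex with $P$; otherwise it is \emph{bad}. A cycle of $\mathsf{torso}(G,Z)$ is \emph{good} if all its arcs are good. $\mathcal F_{\mathsf{bad}}$ denotes the collection of strong subdigraphs of $\mathsf{torso}(G,Z)$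 that are neither trivial nor good cycles. *)

theory Defs
  imports "Graph_Theory.Graph_Theory"
begin

text \<open>Digraphs (possibly with loops and parallel arcs) are AFP Graph_Theory
  pre_digraphs; we work with finite well-formed ones (fin_digraph).\<close>

definition del_verts :: "('a,'b) pre_digraph \<Rightarrow> 'a set \<Rightarrow> ('a,'b) pre_digraph" where
  "del_verts G S = G \<restriction> (verts G - S)"

definition trivial_dg :: "('a,'b) pre_digraph \<Rightarrow> bool" where
  "trivial_dg H \<longleftrightarrow> (\<exists>v. verts H = {v}) \<and> arcs H = {}"

text \<open>A simple directed cycle (a loop is a cycle of length 1).\<close>
definition simple_cycle_dg :: "('a,'b) pre_digraph \<Rightarrow> bool" where
  "simple_cycle_dg H \<longleftrightarrow> strongly_connected H \<and> finite (verts H) \<and>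
     (\<forall>v \<in> verts H. in_degree H v = 1 \<and> out_degree H v = 1)"

definition one_out_regular :: "('a,'b) pre_digraph \<Rightarrow> bool" where
  "one_out_regular H \<longleftrightarrow> (\<forall>v \<in> verts H. out_degree H v = 1)"

definition in_F :: "('a,'b) pre_digraph \<Rightarrow> ('a,'b) pre_digraph \<Rightarrow> bool" where
  "in_F G H \<longleftrightarrow> subgraph H G \<and> strongly_connected H \<and> \<not> trivial_dg H \<and> \<not> simple_cycle_dg H"

definition contains_F :: "('a,'b) pre_digraph \<Rightarrow> bool" where
  "contains_F G \<longleftrightarrow> (\<exists>H. in_F G H)"

text \<open>Paths of length at least 1 from u to v (closed if u = v) whose internal
  vertices are pairwise distinct, distinct from the ends, and lie in Z.\<close>
definition torso_path :: "('a,'b) pre_digraph \<Rightarrow> 'a set \<Rightarrow> 'a \<Rightarrow> 'b list \<Rightarrow> 'a \<Rightarrow> bool" where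
  "torso_path G Z u p v \<longleftrightarrow> pre_digraph.awalk G u p v \<and> p \<noteq> [] \<and>
     distinct (tl (pre_digraph.awalk_verts G u p)) \<and>
     (u \<noteq> v \<longrightarrow> u \<notin> set (tl (pre_digraph.awalk_verts G u p))) \<and>
     set (butlast (tl (pre_digraph.awalk_verts G u p))) \<subseteq> Z"

definition torso :: "('a,'b) pre_digraph \<Rightarrow> 'a set \<Rightarrow> ('a, 'a \<times> 'a) pre_digraph" where
  "torso G Z = \<lparr> verts = verts G - Z,
     arcs = {(u,v). u \<in> verts G - Z \<and> v \<in> verts G - Z \<and> (\<exists>p. torso_path G Z u p v)},
     tail = fst, head = snd \<rparr>"

definition good_arc :: "('a,'b) pre_digraph \<Rightarrow> 'a set \<Rightarrow> 'a \<Rightarrow> 'a \<Rightarrow> bool" where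
  "good_arc G Z u v \<longleftrightarrow> (\<exists>!p. torso_path G Z u p v) \<and>
     (\<forall>p. torso_path G Z u p v \<longrightarrow>
        \<not> (\<exists>c. pre_digraph.cycle (G \<restriction> Z) c \<and>
              tail G ` set c \<inter> set (pre_digraph.awalk_verts G u p) \<noteq> {}))"

definition good_cycle :: "('a,'b) pre_digraph \<Rightarrow> 'a set \<Rightarrow> ('a, 'a \<times> 'a) pre_digraph \<Rightarrow> bool" where
  "good_cycle G Z C \<longleftrightarrow> simple_cycle_dg C \<and> (\<forall>a \<in> arcs C. good_arc G Z (fst a) (snd a))"

definition in_Fbad :: "('a,'b) pre_digraph \<Rightarrow> 'a set \<Rightarrow> ('a, 'a \<times> 'a) pre_digraph
    \<Rightarrow> ('a, 'a \<times> 'a) pre_digraph \<Rightarrow> bool" where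
  "in_Fbad G Z D H \<longleftrightarrow> subgraph H D \<and> strongly_connected H \<and> \<not> trivial_dg H \<and> \<not> good_cycle G Z H"

definition contains_Fbad :: "('a,'b) pre_digraph \<Rightarrow> 'a set \<Rightarrow> ('a, 'a \<times> 'a) pre_digraph \<Rightarrow> bool" where
  "contains_Fbad G Z D \<longleftrightarrow> (\<exists>H. in_Fbad G Z D H)"

end

theory Submission
  imports Defs
begin

lemma cas_transfer:
  assumes "tail K = tail G" "head K = head G"
  shows "pre_digraph.cas K u p v = pre_digraph.cas G u p v"
  using assms by (induct p arbitrary: u) (auto simp: pre_digraph.cas.simps)

lemma awalk_verts_transfer:
  assumes "tail K = tail G" "head K = head G"
  shows "pre_digraph.awalk_verts K u p = pre_digraph.awalk_verts G u p"
  using assms by (induct p arbitrary: u) (auto simp: pre_digraph.awalk_verts.simps)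

lemma awalk_transfer:
  assumes "tail K = tail G" "head K = head G" "pre_digraph.awalk G u p v"
    "u \<in> verts K" "set p \<subseteq> arcs K"
  shows "pre_digraph.awalk K u p v"
  using assms cas_transfer[OF assms(1,2)] by (auto simp: pre_digraph.awalk_def)

context wf_digraph begin

lemma awalk_verts_inner:
  assumes "awalk u p v" "p \<noteq> []"
  shows "awalk_verts u p = u # map (tail G) (tl p) @ [v]"
proof -
  have "awalk_verts u p = map (tail G) p @ [head G (last p)]" using assms(2) by (simp add: awalk_verts_conv)
  moreover have "awlast u p = v" using assms by blast
  moreover have "awhd u p = u" using assms by blast
  ultimately show ?thesis using assms(2) by (cases p) auto
qed

lemma map_tail_tl:
  assumes "awalk u p v"
  shows "map (tail G) (tl p) = butlast (map (head G) p)"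
  using assms
proof (induct p arbitrary: u)
  case Nil then show ?case by simp
next
  case (Cons e es)
  then have "awalk (head G e) es v" by (simp add: awalk_Cons_iff)
  show ?case
  proof (cases es)
    case Nil then show ?thesis by simp
  next
    case (Cons f fs)
    then have "tail G f = head G e" using \<open>awalk (head G e) es v\<close> by (simp add: awalk_Cons_iff)
    then show ?thesis using Cons.hyps[OF \<open>awalk (head G e) es v\<close>] Cons by simp
  qed
qed

end

lemma torso_path_iff:
  assumes "wf_digraph G" "u \<notin> Z" "v \<notin> Z"
  shows "torso_path G Z u p v \<longleftrightarrow> pre_digraph.awalk G u p v \<and> p \<noteq> [] \<and>
     distinct (map (tail G) (tl p)) \<and> set (map (tail G) (tl p)) \<subseteq> Z"
proof
  assume H: "torso_path G Z u p v"
  then have w: "pre_digraph.awalk G u p v" "p \<noteq> []" by (auto simp: torso_path_def)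
  note e = wf_digraph.awalk_verts_inner[OF assms(1) w]
  show "pre_digraph.awalk G u p v \<and> p \<noteq> [] \<and>
     distinct (map (tail G) (tl p)) \<and> set (map (tail G) (tl p)) \<subseteq> Z"
    using H w unfolding torso_path_def e by auto
next
  assume H: "pre_digraph.awalk G u p v \<and> p \<noteq> [] \<and>
     distinct (map (tail G) (tl p)) \<and> set (map (tail G) (tl p)) \<subseteq> Z"
  then have w: "pre_digraph.awalk G u p v" "p \<noteq> []" by auto
  note e = wf_digraph.awalk_verts_inner[OF assms(1) w]
  show "torso_path G Z u p v"
    using H w assms unfolding torso_path_def e by auto
qed

context wf_digraph begin

lemma closed_walk_cycle:
  assumes "awalk y r y" "r \<noteq> []"
  shows "\<exists>c. awalk y c y \<and> distinct (tl (awalk_verts y c)) \<and> c \<noteq> [] \<and> set c \<subseteq> set r"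
  using assms
proof (induct "length r" arbitrary: r rule: less_induct)
  case less
  show ?case
  proof (cases "distinct (tl (awalk_verts y r))")
    case True then show ?thesis using less.prems by blast
  next
    case False
    then obtain e es where r: "r = e # es" using less.prems by (cases r) auto
    with False less.prems have **: "awalk (head G e) es y" "\<not>distinct (awalk_verts (head G e) es)"
      and e: "e \<in> arcs G" "tail G e = y"
      by (auto simp: awalk_Cons_iff)
    obtain q r' s where d: "es = q @ r' @ s" "0 < length r'"
      "\<exists>w. awalk (head G e) q w \<and> awalk w r' w \<and> awalk w s y"
      using awalk_not_distinct_decomp[OF **] by blast
    have "awalk y (e # q @ s) y" using d e by (auto simp: awalk_Cons_iff intro: awalk_appendI)
    moreover have "length (e # q @ s) < length r" using r d by simp
    ultimately obtain c where "awalk y c y \<and> distinct (tl (awalk_verts y c)) \<and> c \<noteq> [] \<and> set c \<subseteq> set (e # q @ s)"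
      using less.hyps by blast
    then show ?thesis using r d by auto
  qed
qed

end


context wf_digraph begin

lemma shortcut:
  assumes "awalk u W v" "W \<noteq> []" "u \<notin> Z" "v \<notin> Z" "set (map (tail G) (tl W)) \<subseteq> Z"
  shows "\<exists>p. torso_path G Z u p v \<and> set p \<subseteq> set W \<and> (p = W \<or>
     (\<exists>c. pre_digraph.cycle (G \<restriction> Z) c \<and> tail G ` set c \<inter> set (awalk_verts u p) \<noteq> {}))"
  using assms
proof (induct "length W" arbitrary: W rule: less_induct)
  case less
  show ?case
  proof (cases "distinct (map (tail G) (tl W))")
    case True
    then have "torso_path G Z u W v" using less.prems
      by (simp add: torso_path_iff[OF wf_digraph_axioms])
    then show ?thesis by blast
  next
    case False
    then obtain e W' where W: "W = e # W'" using less.prems by (cases W) auto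
    with less.prems have wW': "awalk (head G e) W' v" and e: "e \<in> arcs G" "tail G e = u"
      by (auto simp: awalk_Cons_iff)
    have "W' \<noteq> []" using False W by auto
    have nd: "\<not> distinct (awalk_verts (head G e) W')"
      using False W \<open>W' \<noteq> []\<close> by (simp add: awalk_verts_conv)
    obtain q r s where d: "W' = q @ r @ s" "0 < length r"
      "\<exists>w. awalk (head G e) q w \<and> awalk w r w \<and> awalk w s v"
      using awalk_not_distinct_decomp[OF wW' nd] by blast
    then obtain w where dq: "awalk (head G e) q w" and dr: "awalk w r w" and ds: "awalk w s v" by blast
    have tZ: "\<And>f. f \<in> set W' \<Longrightarrow> tail G f \<in> Z" using less.prems(5) W by auto
    have "r \<noteq> []" using d by auto
    then have wr: "w = tail G (hd r)" using dr by (cases r) (auto simp: awalk_Cons_iff)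
    have "set (awalk_verts w r) \<subseteq> Z"
    proof -
      have "awalk_verts w r = map (tail G) r @ [w]"
        using \<open>r \<noteq> []\<close> dr by (auto simp: awalk_verts_conv elim!: awalkE')
      then show ?thesis using tZ d(1) wr \<open>r \<noteq> []\<close> by auto
    qed
    then have drZ: "pre_digraph.awalk (G \<restriction> Z) w r w" by (rule awalk_induce[OF dr])
    interpret GZ: wf_digraph "G \<restriction> Z" by auto
    obtain c where c: "GZ.awalk w c w" "distinct (tl (GZ.awalk_verts w c))" "c \<noteq> []"
      using GZ.closed_walk_cycle[OF drZ \<open>r \<noteq> []\<close>] by blast
    have cyc: "GZ.cycle c" using c unfolding GZ.cycle_def by blast
    have wc: "w \<in> tail G ` set c" using c(1,3) by (cases c) (auto simp: GZ.awalk_Cons_iff)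
    define W2 where "W2 = e # q @ s"
    have wW2: "awalk u W2 v" using dq ds e W2_def by (auto simp: awalk_Cons_iff intro: awalk_appendI)
    have "length W2 < length W" using W d W2_def by simp
    moreover have "set (map (tail G) (tl W2)) \<subseteq> Z" using tZ d(1) W2_def by auto
    ultimately obtain p where p: "torso_path G Z u p v" "set p \<subseteq> set W2"
      "p = W2 \<or> (\<exists>c. pre_digraph.cycle (G \<restriction> Z) c \<and> tail G ` set c \<inter> set (awalk_verts u p) \<noteq> {})"
      using less.hyps[OF _ wW2] less.prems W2_def by blast
    have sub: "set p \<subseteq> set W" using p(2) W d W2_def by auto
    show ?thesis
    proof (cases "p = W2")
      case True
      have "awalk u (e # q) w" using dq e by (auto simp: awalk_Cons_iff)
      then have "awlast u (e # q) = w" by blast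
      moreover have "W2 = (e # q) @ s" using W2_def by simp
      ultimately have "awalk_verts u W2 = butlast (awalk_verts u (e # q)) @ awalk_verts w s"
        using wW2 awalk_verts_append2[of u "e # q" s v] by simp
      then have "w \<in> set (awalk_verts u W2)" using hd_in_awalk_verts(1)[OF ds] by simp
      then show ?thesis using True p(1) sub cyc wc by blast
    next
      case False then show ?thesis using p sub by blast
    qed
  qed
qed

end


lemma strong_out_arc:
  assumes "wf_digraph H" "strongly_connected H" "\<not> trivial_dg H" "v \<in> verts H"
  shows "\<exists>e\<in>arcs H. tail H e = v"
proof (cases "\<exists>m\<in>verts H. m \<noteq> v")
  case True
  then obtain m where m: "m \<in> verts H" "m \<noteq> v" by blast
  then have "v \<rightarrow>\<^sup>*\<^bsub>H\<^esub> m" using assms unfolding strongly_connected_def by blast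
  then obtain p where p: "pre_digraph.awalk H v p m"
    using wf_digraph.reachable_awalk[OF assms(1)] by blast
  then have "p \<noteq> []" using m wf_digraph.awalk_empty_ends[OF assms(1)] by blast
  then show ?thesis using p by (cases p) (auto simp: wf_digraph.awalk_Cons_iff[OF assms(1)])
next
  case False
  then have "verts H = {v}" using assms(4) by blast
  then obtain e where "e \<in> arcs H" using assms(3) unfolding trivial_dg_def by blast
  then show ?thesis using \<open>verts H = {v}\<close> wf_digraph.tail_in_verts[OF assms(1)] by blast
qed

lemma strong_in_arc:
  assumes "wf_digraph H" "strongly_connected H" "\<not> trivial_dg H" "v \<in> verts H"
  shows "\<exists>e\<in>arcs H. head H e = v"
proof (cases "\<exists>m\<in>verts H. m \<noteq> v")
  case True
  then obtain m where m: "m \<in> verts H" "m \<noteq> v" by blast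
  then have "m \<rightarrow>\<^sup>*\<^bsub>H\<^esub> v" using assms unfolding strongly_connected_def by blast
  then obtain p where p: "pre_digraph.awalk H m p v"
    using wf_digraph.reachable_awalk[OF assms(1)] by blast
  then have "p \<noteq> []" using m wf_digraph.awalk_empty_ends[OF assms(1)] by blast
  have "pre_digraph.awalk_verts H m p = map (tail H) p @ [head H (last p)]"
    using \<open>p \<noteq> []\<close> by (simp add: pre_digraph.awalk_verts_conv)
  moreover have "last (pre_digraph.awalk_verts H m p) = v"
    using p wf_digraph.awalkE'[OF assms(1) p] by metis
  ultimately have "head H (last p) = v" by simp
  moreover have "last p \<in> arcs H" using p \<open>p \<noteq> []\<close> by (auto simp: pre_digraph.awalk_def)
  ultimately show ?thesis by blast
next
  case False
  then have "verts H = {v}" using assms(4) by blast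
  then obtain e where "e \<in> arcs H" using assms(3) unfolding trivial_dg_def by blast
  then show ?thesis using \<open>verts H = {v}\<close> wf_digraph.head_in_verts[OF assms(1)] by blast
qed

lemma card_arcs_out:
  assumes "fin_digraph H"
  shows "card (arcs H) = (\<Sum>v\<in>verts H. out_degree H v)"
proof -
  interpret fin_digraph H by fact
  have "arcs H = (\<Union>v\<in>verts H. out_arcs H v)" by (auto simp: out_arcs_def)
  moreover have "card (\<Union>v\<in>verts H. out_arcs H v) = (\<Sum>v\<in>verts H. card (out_arcs H v))"
    by (rule card_UN_disjoint) (auto simp: out_arcs_def)
  ultimately show ?thesis by (simp add: out_degree_def)
qed

lemma card_arcs_in:
  assumes "fin_digraph H"
  shows "card (arcs H) = (\<Sum>v\<in>verts H. in_degree H v)"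
proof -
  interpret fin_digraph H by fact
  have "arcs H = (\<Union>v\<in>verts H. in_arcs H v)" by (auto simp: in_arcs_def)
  moreover have "card (\<Union>v\<in>verts H. in_arcs H v) = (\<Sum>v\<in>verts H. card (in_arcs H v))"
    by (rule card_UN_disjoint) (auto simp: in_arcs_def)
  ultimately show ?thesis by (simp add: in_degree_def)
qed

lemma out1_in1:
  assumes "fin_digraph H" "\<forall>v\<in>verts H. out_degree H v = 1" "\<forall>v\<in>verts H. in_degree H v \<ge> 1"
  shows "\<forall>v\<in>verts H. in_degree H v = 1"
proof (rule ccontr)
  assume "\<not> ?thesis"
  then obtain v where v: "v \<in> verts H" "in_degree H v \<noteq> 1" by blast
  interpret fin_digraph H by fact
  have "(\<Sum>v\<in>verts H. (1::nat)) < (\<Sum>v\<in>verts H. in_degree H v)"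
    using v assms(3) by (intro sum_strict_mono_ex1) force+
  also have "\<dots> = (\<Sum>v\<in>verts H. out_degree H v)"
    using card_arcs_in[OF assms(1)] card_arcs_out[OF assms(1)] by simp
  also have "\<dots> = (\<Sum>v\<in>verts H. (1::nat))" using assms(2) by simp
  finally show False by simp
qed

context wf_digraph begin

lemma walk_prefix:
  assumes "\<forall>x\<in>verts G. out_degree G x = 1" "awalk w p x" "awalk w q y" "length p \<le> length q"
  shows "\<exists>r. q = p @ r"
  using assms(2-4)
proof (induct p arbitrary: w q)
  case Nil then show ?case by simp
next
  case (Cons a p)
  then obtain b q' where q: "q = b # q'" by (cases q) auto
  have a: "a \<in> arcs G" "tail G a = w" "awalk (head G a) p x" using Cons.prems by (auto simp: awalk_Cons_iff)
  have b: "b \<in> arcs G" "tail G b = w" "awalk (head G b) q' y" using Cons.prems q by (auto simp: awalk_Cons_iff)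
  have "w \<in> verts G" using a by auto
  then have "card (out_arcs G w) = 1" using assms(1) by (simp add: out_degree_def)
  moreover have "a \<in> out_arcs G w" "b \<in> out_arcs G w" using a b by (auto simp: out_arcs_def)
  ultimately have "a = b" by (metis card_1_singletonE singletonD)
  then obtain r where "q' = p @ r" using Cons.hyps[OF a(3)] b(3) Cons.prems q by force
  then show ?case using q \<open>a = b\<close> by simp
qed

end


context wf_digraph begin

lemma walk_last_head:
  assumes "awalk u p v" "p \<noteq> []"
  shows "head G (last p) = v"
proof -
  have "awalk_verts u p = map (tail G) p @ [head G (last p)]" using assms(2) by (simp add: awalk_verts_conv)
  moreover have "awlast u p = v" using assms by blast
  ultimately show ?thesis by simp
qed

lemma awalk_replicate:
  assumes "awalk w c w"
  shows "awalk w (concat (replicate n c)) w"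
  using assms by (induct n) (auto simp: awalk_Nil_iff intro: awalk_appendI awalk_hd_in_verts)

lemma torso_walk_verts:
  assumes "awalk u p v" "p \<noteq> []" "e \<in> set p"
  shows "tail G e \<in> insert u (insert v (set (map (tail G) (tl p))))"
    "head G e \<in> insert u (insert v (set (map (tail G) (tl p))))"
proof -
  have "tail G e \<in> set (awalk_verts u p)" "head G e \<in> set (awalk_verts u p)"
    using assms by (auto intro: awalk_verts_arc1 awalk_verts_arc2)
  then show "tail G e \<in> insert u (insert v (set (map (tail G) (tl p))))"
    "head G e \<in> insert u (insert v (set (map (tail G) (tl p))))"
    unfolding awalk_verts_inner[OF assms(1,2)] by auto
qed

end

lemma torso_unique_aux:
  assumes "wf_digraph G" "wf_digraph K" "tail K = tail G" "head K = head G"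
    "\<forall>x\<in>verts K. out_degree K x = 1"
    "torso_path G Z u p v" "torso_path G Z u q v'" "u \<notin> Z" "v \<notin> Z" "v' \<notin> Z"
    "u \<in> verts K" "set p \<subseteq> arcs K" "set q \<subseteq> arcs K" "length p \<le> length q"
  shows "p = q"
proof -
  interpret K: wf_digraph K by fact
  interpret G: wf_digraph G by fact
  have p: "G.awalk u p v" "p \<noteq> []" "set (map (tail G) (tl p)) \<subseteq> Z"
    using assms(6) torso_path_iff[OF assms(1,8,9)] by auto
  have q: "G.awalk u q v'" "q \<noteq> []" "set (map (tail G) (tl q)) \<subseteq> Z"
    using assms(7) torso_path_iff[OF assms(1,8,10)] by auto
  have pK: "K.awalk u p v" using awalk_transfer[OF assms(3,4) p(1) assms(11,12)] .
  have qK: "K.awalk u q v'" using awalk_transfer[OF assms(3,4) q(1) assms(11,13)] .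
  obtain r where r: "q = p @ r" using K.walk_prefix[OF assms(5) pK qK assms(14)] by blast
  show ?thesis
  proof (rule ccontr)
    assume "p \<noteq> q"
    then have "r \<noteq> []" using r by auto
    have "G.awalk v r v'" using q(1) r p(1) by auto
    then have "tail G (hd r) = v" using \<open>r \<noteq> []\<close> by (cases r) (auto simp: G.awalk_Cons_iff)
    moreover have "tail G (hd r) \<in> set (map (tail G) (tl q))" using r p(2) \<open>r \<noteq> []\<close>
      by (cases p; cases r) auto
    ultimately show False using q(3) assms(9) by auto
  qed
qed

lemma torso_unique:
  assumes "wf_digraph G" "wf_digraph K" "tail K = tail G" "head K = head G"
    "\<forall>x\<in>verts K. out_degree K x = 1"
    "torso_path G Z u p v" "torso_path G Z u q v'" "u \<notin> Z" "v \<notin> Z" "v' \<notin> Z"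
    "u \<in> verts K" "set p \<subseteq> arcs K" "set q \<subseteq> arcs K"
  shows "p = q"
proof (cases "length p \<le> length q")
  case True then show ?thesis using torso_unique_aux[OF assms] by blast
next
  case False then show ?thesis using torso_unique_aux[OF assms(1-5,7,6,8,10,9,11,13,12)] by simp
qed

lemma cycle_contra:
  assumes "wf_digraph G" "wf_digraph K" "tail K = tail G" "head K = head G"
    "\<forall>x\<in>verts K. out_degree K x = 1" "Z \<subseteq> verts G"
    "torso_path G Z u p v" "u \<notin> Z" "v \<notin> Z"
    "u \<in> verts K" "set p \<subseteq> arcs K"
    "pre_digraph.cycle (G \<restriction> Z) c" "set c \<subseteq> arcs K"
    "tail G ` set c \<inter> set (pre_digraph.awalk_verts G u p) \<noteq> {}"
  shows False
proof -
  interpret K: wf_digraph K by fact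
  interpret G: wf_digraph G by fact
  interpret GZ: wf_digraph "G \<restriction> Z" by auto
  have p: "G.awalk u p v" "p \<noteq> []"
    using assms(7) torso_path_iff[OF assms(1,8,9)] by auto
  have pK: "K.awalk u p v" using awalk_transfer[OF assms(3,4) p(1) assms(10,11)] .
  obtain w0 where c: "GZ.awalk w0 c w0" "c \<noteq> []" using assms(12) unfolding GZ.cycle_def by blast
  have cZ: "\<And>e. e \<in> set c \<Longrightarrow> tail G e \<in> Z \<and> head G e \<in> Z \<and> e \<in> arcs G"
    using c(1) by (auto simp: GZ.awalk_def)
  have w0: "w0 = tail G (hd c)" using c by (cases c) (auto simp: GZ.awalk_Cons_iff)
  have w0K: "w0 \<in> verts K" using w0 c(2) assms(13) K.tail_in_verts assms(3) by (metis hd_in_set subsetD)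
  have cG: "G.awalk w0 c w0"
    using c(1) cZ assms(6) by (auto simp: GZ.awalk_def G.awalk_def cas_transfer[of "G \<restriction> Z" G])
  have cK: "K.awalk w0 c w0" using awalk_transfer[OF assms(3,4) cG w0K assms(13)] .
  obtain w where w: "w \<in> tail G ` set c" "w \<in> set (G.awalk_verts u p)" using assms(14) by blast
  have wZ: "w \<in> Z" using w(1) cZ by auto
  have avK: "K.awalk_verts = G.awalk_verts"
    using awalk_verts_transfer[OF assms(3,4)] by (intro ext) simp
  have "w \<in> set (K.awalk_verts w0 c)" using w(1) K.awalk_verts_arc1[of _ c w0] assms(3) by auto
  then obtain c1 c2 where "c = c1 @ c2" "K.awalk w0 c1 w" "K.awalk w c2 w0"
    using K.awalk_decomp[OF cK] by blast
  have "w \<in> set (K.awalk_verts u p)" using w(2) avK by simp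
  then obtain p1 p2 where p12: "p = p1 @ p2" "K.awalk u p1 w" "K.awalk w p2 v"
    using K.awalk_decomp[OF pK] by blast
  have "p2 \<noteq> []" using p12(3) wZ assms(9) K.awalk_empty_ends by blast
  define R where "R = c2 @ concat (replicate (length p2) c)"
  have RK: "K.awalk w R w0" unfolding R_def
    using \<open>K.awalk w c2 w0\<close> K.awalk_replicate[OF cK] by (auto intro: K.awalk_appendI)
  have "length (concat (replicate (length p2) c)) = length p2 * length c"
    by (simp add: length_concat sum_list_replicate)
  moreover have "length c \<ge> 1" using c(2) by (cases c) auto
  ultimately have "length p2 \<le> length R" unfolding R_def
    by (metis le_add2 mult.right_neutral mult_le_mono2 order_trans length_append)
  then obtain r where "R = p2 @ r" using K.walk_prefix[OF assms(5) p12(3) RK] by blast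
  then have "last p2 \<in> set R" using \<open>p2 \<noteq> []\<close> by simp
  moreover have "set R \<subseteq> set c" unfolding R_def using \<open>c = c1 @ c2\<close> by auto
  ultimately have "head G (last p2) \<in> Z" using cZ by auto
  moreover have "head K (last p2) = v" using K.walk_last_head[OF p12(3) \<open>p2 \<noteq> []\<close>] .
  ultimately show False using assms(4,9) by simp
qed


lemma cycle_Kwalk:
  assumes "wf_digraph G" "wf_digraph K" "tail K = tail G" "head K = head G" "Z \<subseteq> verts G"
    "pre_digraph.cycle (G \<restriction> Z) c" "set c \<subseteq> arcs K"
  shows "\<exists>w0. pre_digraph.awalk K w0 c w0 \<and> c \<noteq> [] \<and> (\<forall>e\<in>set c. tail G e \<in> Z \<and> head G e \<in> Z \<and> e \<in> arcs G)"
proof -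
  interpret K: wf_digraph K by fact
  interpret G: wf_digraph G by fact
  interpret GZ: wf_digraph "G \<restriction> Z" by auto
  obtain w0 where c: "GZ.awalk w0 c w0" "c \<noteq> []" using assms(6) unfolding GZ.cycle_def by blast
  have cZ: "\<And>e. e \<in> set c \<Longrightarrow> tail G e \<in> Z \<and> head G e \<in> Z \<and> e \<in> arcs G"
    using c(1) by (auto simp: GZ.awalk_def)
  have w0: "w0 = tail G (hd c)" using c by (cases c) (auto simp: GZ.awalk_Cons_iff)
  have w0K: "w0 \<in> verts K" using w0 c(2) assms(7) K.tail_in_verts assms(3) by (metis hd_in_set subsetD)
  have cG: "G.awalk w0 c w0"
    using c(1) cZ assms(5) by (auto simp: GZ.awalk_def G.awalk_def cas_transfer[of "G \<restriction> Z" G])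
  have cK: "K.awalk w0 c w0" using awalk_transfer[OF assms(3,4) cG w0K assms(7)] .
  then show ?thesis using c(2) cZ by blast
qed

lemma dir2:
  assumes fin: "fin_digraph G" and Zv: "Z \<subseteq> verts G" and SZ: "S \<inter> Z = {}"
    and HF: "in_Fbad G Z (del_verts (torso G Z) S) H'"
  shows "contains_F (del_verts G S)"
proof -
  interpret G: fin_digraph G by fact
  have sub: "subgraph H' (del_verts (torso G Z) S)" and sH: "strongly_connected H'"
    and ntH: "\<not> trivial_dg H'" and ngH: "\<not> good_cycle G Z H'"
    using HF unfolding in_Fbad_def by auto
  have wfH: "wf_digraph H'" using sub by (auto simp: subgraph_def)
  interpret H: wf_digraph H' by fact
  have tlH: "tail H' = fst" "head H' = snd"
    using sub by (auto simp: subgraph_def compatible_def del_verts_def torso_def)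
  have vH: "verts H' \<subseteq> verts G - Z - S"
    using sub by (auto simp: subgraph_def del_verts_def torso_def)
  have aH: "\<And>a. a \<in> arcs H' \<Longrightarrow> fst a \<in> verts H' \<and> snd a \<in> verts H' \<and> (\<exists>p. torso_path G Z (fst a) p (snd a))"
  proof -
    fix a assume a: "a \<in> arcs H'"
    then have "fst a \<in> verts H' \<and> snd a \<in> verts H'" using H.tail_in_verts H.head_in_verts tlH by metis
    moreover have "a \<in> arcs (torso G Z)" using a sub by (auto simp: subgraph_def del_verts_def)
    ultimately show "fst a \<in> verts H' \<and> snd a \<in> verts H' \<and> (\<exists>p. torso_path G Z (fst a) p (snd a))"
      by (auto simp: torso_def)
  qed
  define TP where "TP = {p. \<exists>a\<in>arcs H'. torso_path G Z (fst a) p (snd a)}"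
  define CY where "CY = {c. pre_digraph.cycle (G \<restriction> Z) c \<and> (\<exists>a\<in>arcs H'. \<exists>p. torso_path G Z (fst a) p (snd a)
     \<and> tail G ` set c \<inter> set (G.awalk_verts (fst a) p) \<noteq> {})}"
  define A where "A = (\<Union>p\<in>TP. set p) \<union> (\<Union>c\<in>CY. set c)"
  define K :: "('a,'b) pre_digraph" where "K = \<lparr>verts = verts H' \<union> tail G ` A \<union> head G ` A, arcs = A,
     tail = tail G, head = head G\<rparr>"
  have Kt: "tail K = tail G" "head K = head G" "arcs K = A" "verts K = verts H' \<union> tail G ` A \<union> head G ` A"
    by (simp_all add: K_def)
  have wfK: "wf_digraph K" by unfold_locales (auto simp: K_def)
  interpret K: wf_digraph K by fact
  have GZ: "wf_digraph (G \<restriction> Z)" by auto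
  have tpv: "\<And>u p v. u \<notin> Z \<Longrightarrow> v \<notin> Z \<Longrightarrow> torso_path G Z u p v \<Longrightarrow>
     G.awalk u p v \<and> p \<noteq> [] \<and> set (map (tail G) (tl p)) \<subseteq> Z"
    using torso_path_iff[OF G.wf_digraph_axioms] by blast
  have Ae: "e \<in> arcs G \<and> tail G e \<in> verts G - S \<and> head G e \<in> verts G - S" if eA: "e \<in> A" for e
  proof -
    show ?thesis
    proof (cases "\<exists>p\<in>TP. e \<in> set p")
      case True
      then obtain a p where a: "a \<in> arcs H'" "torso_path G Z (fst a) p (snd a)" "e \<in> set p"
        unfolding TP_def by blast
      have nz: "fst a \<notin> Z" "snd a \<notin> Z" "fst a \<notin> S" "snd a \<notin> S" using aH[OF a(1)] vH by auto
      note pp = tpv[OF nz(1,2) a(2)]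
      have "e \<in> arcs G" using pp a(3) by auto
      moreover have "tail G e \<in> verts G" "head G e \<in> verts G" using \<open>e \<in> arcs G\<close> by auto
      moreover have "tail G e \<notin> S" "head G e \<notin> S"
        using G.torso_walk_verts[OF conjunct1[OF pp] conjunct1[OF conjunct2[OF pp]] a(3)] pp nz SZ by auto
      ultimately show ?thesis by auto
    next
      case False
      then obtain c where c: "c \<in> CY" "e \<in> set c" using eA unfolding A_def by blast
      then have cyc: "pre_digraph.cycle (G \<restriction> Z) c" unfolding CY_def by blast
      obtain w0 where "pre_digraph.awalk (G \<restriction> Z) w0 c w0" using cyc unfolding pre_digraph.cycle_def by blast
      then have "e \<in> arcs (G \<restriction> Z)" using c(2) by (auto simp: pre_digraph.awalk_def)
      then show ?thesis using Zv SZ by auto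
    qed
  qed
  have subK: "subgraph K (del_verts G S)"
  proof -
    have "verts K \<subseteq> verts G - S" using vH Ae unfolding Kt by blast
    moreover have "arcs K \<subseteq> arcs (del_verts G S)" using Ae by (auto simp: Kt del_verts_def)
    moreover have "wf_digraph (del_verts G S)" by (auto simp: del_verts_def)
    ultimately show ?thesis using wfK by (auto simp: subgraph_def compatible_def del_verts_def Kt)
  qed
  have TPK: "K.awalk (fst a) p (snd a)" "p \<noteq> []" "set (map (tail G) (tl p)) \<subseteq> Z" "fst a \<notin> Z" "snd a \<notin> Z"
     "fst a \<in> verts H'" "snd a \<in> verts H'"
    if "a \<in> arcs H'" "torso_path G Z (fst a) p (snd a)" for a p
  proof -
    have nz: "fst a \<notin> Z" "snd a \<notin> Z" using aH[OF that(1)] vH by auto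
    note pp = tpv[OF nz that(2)]
    have "set p \<subseteq> arcs K" using that unfolding Kt A_def TP_def by blast
    moreover have "fst a \<in> verts K" using aH[OF that(1)] Kt by auto
    ultimately show "K.awalk (fst a) p (snd a)" using awalk_transfer[OF Kt(1,2)] pp by blast
    show "p \<noteq> []" "set (map (tail G) (tl p)) \<subseteq> Z" "fst a \<notin> Z" "snd a \<notin> Z" 
      "fst a \<in> verts H'" "snd a \<in> verts H'" using pp nz aH[OF that(1)] by auto
  qed
  have Hreach: "y1 \<rightarrow>\<^sup>*\<^bsub>K\<^esub> y2" if "y1 \<in> verts H'" "y2 \<in> verts H'" for y1 y2
  proof -
    have "y1 \<rightarrow>\<^sup>*\<^bsub>H'\<^esub> y2" using sH that unfolding strongly_connected_def by blast
    then obtain q where q: "H.awalk y1 q y2" using H.reachable_awalk by blast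
    have "\<And>y. H.awalk y q y2 \<Longrightarrow> y \<rightarrow>\<^sup>*\<^bsub>K\<^esub> y2"
    proof (induct q)
      case Nil
      then have "y = y2" "y \<in> verts H'" by (auto simp: H.awalk_Nil_iff)
      then show ?case using Kt by auto
    next
      case (Cons a q)
      then have a: "a \<in> arcs H'" "fst a = y" "H.awalk (snd a) q y2" by (auto simp: H.awalk_Cons_iff tlH)
      obtain p where "torso_path G Z (fst a) p (snd a)" using aH[OF a(1)] by blast
      then have "y \<rightarrow>\<^sup>*\<^bsub>K\<^esub> snd a" using TPK[OF a(1)] a(2) K.reachable_awalkI by blast
      then show ?case using Cons.hyps[OF a(3)] K.reachable_trans by blast
    qed
    then show ?thesis using q by blast
  qed
  have Kreach: "\<exists>y\<in>verts H'. y \<rightarrow>\<^sup>*\<^bsub>K\<^esub> x \<and> x \<rightarrow>\<^sup>*\<^bsub>K\<^esub> y" if xK: "x \<in> verts K" for x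
  proof (cases "x \<in> verts H'")
    case True then show ?thesis using Kt by auto
  next
    case False
    then obtain e where e: "e \<in> A" "x = tail G e \<or> x = head G e" using xK Kt by auto
    show ?thesis
    proof (cases "\<exists>p\<in>TP. e \<in> set p")
      case True
      then obtain a p where a: "a \<in> arcs H'" "torso_path G Z (fst a) p (snd a)" "e \<in> set p"
        unfolding TP_def by blast
      note pp = TPK[OF a(1,2)]
      have "x \<in> set (K.awalk_verts (fst a) p)"
        using e(2) K.awalk_verts_arc1[OF a(3)] K.awalk_verts_arc2[OF pp(1) a(3)] Kt by auto
      then have "fst a \<rightarrow>\<^sup>*\<^bsub>K\<^esub> x" "x \<rightarrow>\<^sup>*\<^bsub>K\<^esub> snd a"
        using K.awalk_verts_reachable_from[OF pp(1)] K.awalk_verts_reachable_to[OF pp(1)] by auto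
      moreover have "snd a \<rightarrow>\<^sup>*\<^bsub>K\<^esub> fst a" using Hreach pp by blast
      ultimately have "fst a \<rightarrow>\<^sup>*\<^bsub>K\<^esub> x" "x \<rightarrow>\<^sup>*\<^bsub>K\<^esub> fst a"
        using K.reachable_trans by blast+
      then show ?thesis using pp(6) by blast
    next
      case False
      then obtain c where c: "c \<in> CY" "e \<in> set c" using e unfolding A_def by blast
      then obtain a p where cy: "pre_digraph.cycle (G \<restriction> Z) c" "a \<in> arcs H'" "torso_path G Z (fst a) p (snd a)"
        "tail G ` set c \<inter> set (G.awalk_verts (fst a) p) \<noteq> {}" unfolding CY_def by blast
      note pp = TPK[OF cy(2,3)]
      have "set c \<subseteq> arcs K" using c unfolding Kt A_def by blast
      then obtain w0 where w0: "K.awalk w0 c w0"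
        using cycle_Kwalk[OF G.wf_digraph_axioms wfK Kt(1,2) Zv cy(1)] by blast
      obtain w where w: "w \<in> tail G ` set c" "w \<in> set (G.awalk_verts (fst a) p)" using cy(4) by blast
      have avK: "K.awalk_verts = G.awalk_verts"
        using awalk_verts_transfer[OF Kt(1,2)] by (intro ext) simp
      have wc: "w \<in> set (K.awalk_verts w0 c)" using w(1) K.awalk_verts_arc1[of _ c w0] Kt by auto
      have xc: "x \<in> set (K.awalk_verts w0 c)"
        using e(2) K.awalk_verts_arc1[OF c(2)] K.awalk_verts_arc2[OF w0 c(2)] Kt by auto
      have wp: "w \<in> set (K.awalk_verts (fst a) p)" using w(2) avK by simp
      have r1: "fst a \<rightarrow>\<^sup>*\<^bsub>K\<^esub> w" "w \<rightarrow>\<^sup>*\<^bsub>K\<^esub> snd a"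
        using K.awalk_verts_reachable_from[OF pp(1) wp] K.awalk_verts_reachable_to[OF pp(1) wp] by auto
      have r2: "w0 \<rightarrow>\<^sup>*\<^bsub>K\<^esub> w" "w \<rightarrow>\<^sup>*\<^bsub>K\<^esub> w0" "w0 \<rightarrow>\<^sup>*\<^bsub>K\<^esub> x" "x \<rightarrow>\<^sup>*\<^bsub>K\<^esub> w0"
        using K.awalk_verts_reachable_from[OF w0 wc] K.awalk_verts_reachable_to[OF w0 wc]
          K.awalk_verts_reachable_from[OF w0 xc] K.awalk_verts_reachable_to[OF w0 xc] by auto
      have "snd a \<rightarrow>\<^sup>*\<^bsub>K\<^esub> fst a" using Hreach pp by blast
      have "fst a \<rightarrow>\<^sup>*\<^bsub>K\<^esub> x" using K.reachable_trans[OF r1(1) K.reachable_trans[OF r2(2) r2(3)]] .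
      moreover have "x \<rightarrow>\<^sup>*\<^bsub>K\<^esub> fst a"
        using K.reachable_trans[OF r2(4) K.reachable_trans[OF r2(1) K.reachable_trans[OF r1(2) \<open>snd a \<rightarrow>\<^sup>*\<^bsub>K\<^esub> fst a\<close>]]] .
      ultimately show ?thesis using pp(6) by blast
    qed
  qed
  have sK: "strongly_connected K"
  proof -
    have "verts H' \<noteq> {}" using sH unfolding strongly_connected_def by blast
    then have "verts K \<noteq> {}" using Kt by auto
    moreover have "\<forall>u\<in>verts K. \<forall>v\<in>verts K. u \<rightarrow>\<^sup>*\<^bsub>K\<^esub> v"
    proof (intro ballI)
      fix u v assume "u \<in> verts K" "v \<in> verts K"
      obtain y1 where y1: "y1 \<in> verts H'" "u \<rightarrow>\<^sup>*\<^bsub>K\<^esub> y1"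
        using Kreach[OF \<open>u \<in> verts K\<close>] by blast
      obtain y2 where y2: "y2 \<in> verts H'" "y2 \<rightarrow>\<^sup>*\<^bsub>K\<^esub> v"
        using Kreach[OF \<open>v \<in> verts K\<close>] by blast
      show "u \<rightarrow>\<^sup>*\<^bsub>K\<^esub> v"
        using K.reachable_trans[OF y1(2) K.reachable_trans[OF Hreach[OF y1(1) y2(1)] y2(2)]] .
    qed
    ultimately show ?thesis unfolding strongly_connected_def by blast
  qed
  obtain v0 where v0: "v0 \<in> verts H'" using sH unfolding strongly_connected_def by blast
  obtain a0 where a0: "a0 \<in> arcs H'" using strong_out_arc[OF wfH sH ntH v0] by blast
  have ntK: "\<not> trivial_dg K"
  proof -
    obtain p where p: "torso_path G Z (fst a0) p (snd a0)" using aH[OF a0] by blast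
    then have "p \<noteq> []" using TPK[OF a0] by blast
    then obtain e where "e \<in> set p" by (cases p) auto
    moreover have "p \<in> TP" using p a0 unfolding TP_def by blast
    ultimately have "e \<in> A" unfolding A_def by blast
    then show ?thesis unfolding trivial_dg_def Kt by blast
  qed
  have nscK: "\<not> simple_cycle_dg K"
  proof
    assume "simple_cycle_dg K"
    then have deg: "\<forall>x\<in>verts K. out_degree K x = 1" unfolding simple_cycle_dg_def by blast
    have uniq: "p = q" if "a \<in> arcs H'" "b \<in> arcs H'" "fst a = fst b"
      "torso_path G Z (fst a) p (snd a)" "torso_path G Z (fst b) q (snd b)" for a b p q
    proof -
      have "set p \<subseteq> arcs K" "set q \<subseteq> arcs K" using that unfolding Kt A_def TP_def by blast+
      moreover have "fst a \<in> verts K" using aH[OF that(1)] Kt by auto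
      ultimately show ?thesis using torso_unique[OF G.wf_digraph_axioms wfK Kt(1,2) deg that(4)]
        that TPK[OF that(1,4)] TPK[OF that(2,5)] by auto
    qed
    have odH: "out_degree H' x = 1" if xH: "x \<in> verts H'" for x
    proof -
      obtain a where a: "a \<in> arcs H'" "fst a = x" using strong_out_arc[OF wfH sH ntH xH] tlH by auto
      have "out_arcs H' x = {a}"
      proof (intro equalityI subsetI)
        fix b assume "b \<in> out_arcs H' x"
        then have b: "b \<in> arcs H'" "fst b = x" by (auto simp: out_arcs_def tlH)
        obtain p where p: "torso_path G Z (fst a) p (snd a)" using aH[OF a(1)] by blast
        obtain q where q: "torso_path G Z (fst b) q (snd b)" using aH[OF b(1)] by blast
        have "p = q" using uniq[OF a(1) b(1) _ p q] a b by simp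
        then have "snd a = snd b" using TPK[OF a(1) p] TPK[OF b(1) q] a(2) b(2) K.awalk_ends by metis
        then show "b \<in> {a}" using a(2) b(2) by (simp add: prod_eq_iff)
      qed (use a in \<open>auto simp: out_arcs_def tlH\<close>)
      then show ?thesis by (simp add: out_degree_def)
    qed
    have finH: "fin_digraph H'"
    proof -
      have "finite (verts H')" using vH finite_subset G.finite_verts by blast
      moreover have "arcs H' \<subseteq> verts H' \<times> verts H'" using aH by (auto simp: mem_Times_iff)
      ultimately have "finite (arcs H')" using finite_subset by blast
      then show ?thesis using wfH \<open>finite (verts H')\<close> by (simp add: fin_digraph_def fin_digraph_axioms_def)
    qed
    have idH: "\<forall>v\<in>verts H'. in_degree H' v \<ge> 1"
    proof
      fix v assume v: "v \<in> verts H'"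
      obtain e where "e \<in> arcs H'" "head H' e = v" using strong_in_arc[OF wfH sH ntH v] by blast
      then have "e \<in> in_arcs H' v" by (simp add: in_arcs_def)
      then have "in_arcs H' v \<noteq> {}" by blast
      moreover have "finite (in_arcs H' v)" using fin_digraph.finite_in_arcs[OF finH] .
      ultimately show "in_degree H' v \<ge> 1" by (simp add: in_degree_def Suc_le_eq card_gt_0_iff)
    qed
    have "\<forall>v\<in>verts H'. in_degree H' v = 1" using out1_in1[OF finH _ idH] odH by blast
    then have scH: "simple_cycle_dg H'" using odH sH finH unfolding simple_cycle_dg_def
      by (auto simp: fin_digraph_def fin_digraph_axioms_def)
    then obtain a where a: "a \<in> arcs H'" "\<not> good_arc G Z (fst a) (snd a)"
      using ngH unfolding good_cycle_def by blast
    obtain p0 where p0: "torso_path G Z (fst a) p0 (snd a)" using aH[OF a(1)] by blast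
    have "\<exists>!p. torso_path G Z (fst a) p (snd a)"
      using p0 uniq[OF a(1) a(1) refl] by blast
    then obtain p c where pc: "torso_path G Z (fst a) p (snd a)" "pre_digraph.cycle (G \<restriction> Z) c"
      "tail G ` set c \<inter> set (G.awalk_verts (fst a) p) \<noteq> {}"
      using a(2) unfolding good_arc_def by blast
    have "c \<in> CY" using pc a(1) unfolding CY_def by blast
    then have "set c \<subseteq> arcs K" unfolding Kt A_def by blast
    moreover have "set p \<subseteq> arcs K" using pc a(1) unfolding Kt A_def TP_def by blast
    moreover have "fst a \<in> verts K" using aH[OF a(1)] Kt by auto
    ultimately show False
      using cycle_contra[OF G.wf_digraph_axioms wfK Kt(1,2) deg Zv pc(1) _ _ _ _ pc(2) _ pc(3)]
        TPK[OF a(1) pc(1)] by blast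
  qed
  show ?thesis unfolding contains_F_def in_F_def using subK sK ntK nscK by blast
qed


context wf_digraph begin

lemma walk_to_set:
  assumes "awalk x q n" "n \<in> N"
  shows "\<exists>q1 q3 v. q = q1 @ q3 \<and> v \<in> N \<and> awalk x q1 v \<and> awalk v q3 n \<and> (\<forall>e\<in>set q1. tail G e \<notin> N)"
  using assms
proof (induct q arbitrary: x)
  case Nil then show ?case by (auto simp: awalk_Nil_iff)
next
  case (Cons e q)
  show ?case
  proof (cases "x \<in> N")
    case True
    then show ?thesis using Cons.prems by (intro exI[of _ "[]"] exI[of _ "e # q"] exI[of _ x])
      (auto simp: awalk_Nil_iff dest: awalk_hd_in_verts)
  next
    case False
    have e: "e \<in> arcs G" "tail G e = x" "awalk (head G e) q n" using Cons.prems by (auto simp: awalk_Cons_iff)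
    obtain q1 q3 v where "q = q1 @ q3" "v \<in> N" "awalk (head G e) q1 v" "awalk v q3 n" "\<forall>e\<in>set q1. tail G e \<notin> N"
      using Cons.hyps[OF e(3) Cons.prems(2)] by blast
    then show ?thesis using e False
      by (intro exI[of _ "e # q1"] exI[of _ q3] exI[of _ v]) (auto simp: awalk_Cons_iff)
  qed
qed

lemma walk_from_set:
  assumes "awalk n q w" "n \<in> N"
  shows "\<exists>u q2. u \<in> N \<and> awalk u q2 w \<and> (\<forall>e\<in>set q2. head G e \<notin> N)"
  using assms
proof (induct q arbitrary: w rule: rev_induct)
  case Nil then show ?case by (intro exI[of _ w] exI[of _ "[]"]) (auto simp: awalk_Nil_iff)
next
  case (snoc e q)
  have q: "awalk n q (tail G e)" and e: "e \<in> arcs G" "head G e = w"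
    using snoc.prems(1) by (auto simp: awalk_Cons_iff awalk_Nil_iff)
  obtain u q2 where u: "u \<in> N" "awalk u q2 (tail G e)" "\<forall>e\<in>set q2. head G e \<notin> N"
    using snoc.hyps[OF q snoc.prems(2)] by blast
  show ?case
  proof (cases "head G e \<in> N")
    case True then show ?thesis using e by (intro exI[of _ w] exI[of _ "[]"]) (auto simp: awalk_Nil_iff)
  next
    case False
    have "awalk u (q2 @ [e]) w" using u(2) e by (auto intro: awalk_appendI simp: awalk_Cons_iff awalk_Nil_iff)
    then show ?thesis using u False by (intro exI[of _ u] exI[of _ "q2 @ [e]"]) auto
  qed
qed

end


lemma dir1:
  assumes fin: "fin_digraph G" and Zv: "Z \<subseteq> verts G"
    and noF: "\<not> contains_F (G \<restriction> (Z \<union> T))"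
    and HF: "in_F (del_verts G S) H"
  shows "contains_Fbad G Z (del_verts (torso G Z) S)"
proof -
  interpret G: fin_digraph G by fact
  have subH: "subgraph H (del_verts G S)" and sH: "strongly_connected H"
    and ntH: "\<not> trivial_dg H" and nscH: "\<not> simple_cycle_dg H"
    using HF unfolding in_F_def by auto
  have wfH: "wf_digraph H" using subH by (auto simp: subgraph_def)
  interpret H: wf_digraph H by fact
  have tH: "tail H = tail G" "head H = head G"
    using subH by (auto simp: subgraph_def compatible_def del_verts_def)
  have vH: "verts H \<subseteq> verts G - S" and aHs: "arcs H \<subseteq> arcs G"
    using subH by (auto simp: subgraph_def del_verts_def)
  have HG: "G.awalk u p v" if "H.awalk u p v" for u p v
  proof -
    have "u \<in> verts G" "set p \<subseteq> arcs G" using that vH aHs by (auto simp: H.awalk_def)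
    then show ?thesis using awalk_transfer[of G H, OF tH(1)[symmetric] tH(2)[symmetric] that] by blast
  qed
  have finH: "fin_digraph H"
  proof -
    have "verts H \<subseteq> verts G" using vH by blast
    then have "finite (verts H)" "finite (arcs H)"
      using aHs finite_subset[OF _ G.finite_verts] finite_subset[OF _ G.finite_arcs] by blast+
    then show ?thesis using wfH by (simp add: fin_digraph_def fin_digraph_axioms_def)
  qed
  define N where "N = verts H - Z"
  have NZ: "x \<in> Z" if "x \<in> verts H" "x \<notin> N" for x using that N_def by blast
  have "N \<noteq> {}"
  proof
    assume "N = {}"
    then have vZ: "verts H \<subseteq> Z" unfolding N_def by blast
    have "subgraph H (G \<restriction> (Z \<union> T))"
    proof -
      have "arcs H \<subseteq> arcs (G \<restriction> (Z \<union> T))"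
        using aHs vZ H.tail_in_verts H.head_in_verts tH by auto
      moreover have "wf_digraph (G \<restriction> (Z \<union> T))" by auto
      ultimately show ?thesis using vZ wfH tH unfolding subgraph_def compatible_def by auto
    qed
    then show False using noF sH ntH nscH unfolding contains_F_def in_F_def by blast
  qed
  define H' :: "('a, 'a \<times> 'a) pre_digraph" where "H' = \<lparr>verts = N,
     arcs = {(u,v). u \<in> N \<and> v \<in> N \<and> (\<exists>p. torso_path G Z u p v \<and> set p \<subseteq> arcs H)},
     tail = fst, head = snd\<rparr>"
  have H't: "verts H' = N" "tail H' = fst" "head H' = snd"
     "arcs H' = {(u,v). u \<in> N \<and> v \<in> N \<and> (\<exists>p. torso_path G Z u p v \<and> set p \<subseteq> arcs H)}"
    by (simp_all add: H'_def)
  have wfH': "wf_digraph H'" by unfold_locales (auto simp: H'_def)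
  interpret H': wf_digraph H' by fact
  have finH': "fin_digraph H'"
  proof -
    have "N \<subseteq> verts G" using N_def vH by blast
    then have "finite N" using finite_subset[OF _ G.finite_verts] by blast
    moreover have "arcs H' \<subseteq> N \<times> N" using H't by auto
    ultimately have "finite (arcs H')" using finite_subset by blast
    then show ?thesis using wfH' \<open>finite N\<close> H't by (simp add: fin_digraph_def fin_digraph_axioms_def)
  qed
  have SEG: "(u,v) \<in> arcs H'" if "u \<in> N" "v \<in> N" "e \<in> arcs H" "tail G e = u"
     "H.awalk (head G e) q v" "\<forall>f\<in>set q. tail G f \<notin> N" for u v e q
  proof -
    have HW: "H.awalk u (e # q) v" using that tH by (auto simp: H.awalk_Cons_iff)
    then have W: "G.awalk u (e # q) v" by (rule HG)
    have "set (map (tail G) (tl (e # q))) \<subseteq> Z"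
    proof
      fix x assume "x \<in> set (map (tail G) (tl (e # q)))"
      then obtain f where f: "f \<in> set q" "x = tail G f" by auto
      then have "f \<in> arcs H" using that(5) by (auto simp: H.awalk_def)
      then have "x \<in> verts H" using f tH H.tail_in_verts by metis
      then show "x \<in> Z" using NZ f that(6) by blast
    qed
    moreover have "u \<notin> Z" "v \<notin> Z" using that N_def by auto
    ultimately obtain p where "torso_path G Z u p v" "set p \<subseteq> set (e # q)"
      using G.shortcut[OF W] by blast
    moreover have "set (e # q) \<subseteq> arcs H" using HW by (auto simp: H.awalk_def)
    ultimately show ?thesis using that(1,2) H't by blast
  qed
  have reachH': "\<forall>u. u \<in> N \<longrightarrow> H.awalk u q x \<longrightarrow> u \<rightarrow>\<^sup>*\<^bsub>H'\<^esub> x" if xN: "x \<in> N" for q x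
  proof (induct "length q" arbitrary: q rule: less_induct)
    case less
    show ?case
    proof (intro allI impI)
      fix u assume u: "u \<in> N" "H.awalk u q x"
      show "u \<rightarrow>\<^sup>*\<^bsub>H'\<^esub> x"
      proof (cases q)
        case Nil
        then have "u = x" using u by (auto simp: H.awalk_Nil_iff)
        then show ?thesis using u H't by auto
      next
        case (Cons e q')
        then have e: "e \<in> arcs H" "tail G e = u" "H.awalk (head H e) q' x"
          using u tH by (auto simp: H.awalk_Cons_iff)
        obtain q1 q3 v where d: "q' = q1 @ q3" "v \<in> N" "H.awalk (head H e) q1 v" "H.awalk v q3 x"
          "\<forall>e\<in>set q1. tail H e \<notin> N"
          using H.walk_to_set[OF e(3) xN] by blast
        have "(u,v) \<in> arcs H'" using SEG[OF u(1) d(2) e(1,2)] d(3,5) tH by simp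
        then have "H'.awalk u [(u,v)] v" using H't by (auto simp: H'.awalk_Cons_iff H'.awalk_Nil_iff)
        then have "u \<rightarrow>\<^sup>*\<^bsub>H'\<^esub> v" by (rule H'.reachable_awalkI)
        moreover have "v \<rightarrow>\<^sup>*\<^bsub>H'\<^esub> x" using less.hyps[of q3] Cons d by auto
        ultimately show ?thesis by (rule H'.reachable_trans)
      qed
    qed
  qed
  have sH': "strongly_connected H'"
  proof -
    have "\<forall>u\<in>verts H'. \<forall>x\<in>verts H'. u \<rightarrow>\<^sup>*\<^bsub>H'\<^esub> x"
    proof (intro ballI)
      fix u x assume "u \<in> verts H'" "x \<in> verts H'"
      then have ux: "u \<in> N" "x \<in> N" using H't by auto
      then have "u \<rightarrow>\<^sup>*\<^bsub>H\<^esub> x" using sH N_def unfolding strongly_connected_def by blast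
      then obtain q where "H.awalk u q x" using H.reachable_awalk by blast
      then show "u \<rightarrow>\<^sup>*\<^bsub>H'\<^esub> x" using reachH'[OF ux(2)] ux(1) by blast
    qed
    then show ?thesis using \<open>N \<noteq> {}\<close> H't unfolding strongly_connected_def by auto
  qed
  obtain n where n: "n \<in> N" using \<open>N \<noteq> {}\<close> by blast
  have nH: "n \<in> verts H" using n N_def by auto
  have post: "\<exists>q1 v. v \<in> N \<and> H.awalk (head G x) q1 v \<and> (\<forall>e\<in>set q1. tail G e \<notin> N)"
    if "x \<in> arcs H" for x
  proof -
    have "head G x \<in> verts H" using that tH H.head_in_verts by metis
    then have "head G x \<rightarrow>\<^sup>*\<^bsub>H\<^esub> n" using sH nH unfolding strongly_connected_def by blast
    then obtain q where "H.awalk (head G x) q n" using H.reachable_awalk by blast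
    then show ?thesis using H.walk_to_set[of _ _ n N] n tH by metis
  qed
  have ntH': "\<not> trivial_dg H'"
  proof -
    obtain e where e: "e \<in> arcs H" "tail H e = n" using strong_out_arc[OF wfH sH ntH nH] by blast
    obtain q1 v where "v \<in> N" "H.awalk (head G e) q1 v" "\<forall>e\<in>set q1. tail G e \<notin> N"
      using post[OF e(1)] by blast
    then have "(n,v) \<in> arcs H'" using SEG[OF n _ e(1)] e(2) tH by simp
    then show ?thesis unfolding trivial_dg_def by blast
  qed
  have wfT: "wf_digraph (torso G Z)" by unfold_locales (auto simp: torso_def)
  have subH': "subgraph H' (del_verts (torso G Z) S)"
  proof -
    have "verts H' \<subseteq> verts (del_verts (torso G Z) S)"
      using H't N_def vH by (auto simp: del_verts_def torso_def)
    moreover have "arcs H' \<subseteq> arcs (del_verts (torso G Z) S)"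
    proof
      fix a assume "a \<in> arcs H'"
      then obtain u v p where a: "a = (u,v)" "u \<in> N" "v \<in> N" "torso_path G Z u p v" using H't by blast
      then have "u \<in> verts G - Z - S" "v \<in> verts G - Z - S" using N_def vH by auto
      then show "a \<in> arcs (del_verts (torso G Z) S)" using a by (auto simp: del_verts_def torso_def)
    qed
    moreover have "wf_digraph (del_verts (torso G Z) S)"
      unfolding del_verts_def using wf_digraph.wellformed_induce_subgraph[OF wfT] .
    ultimately show ?thesis using wfH' H't
      unfolding subgraph_def compatible_def by (simp add: del_verts_def torso_def)
  qed
  have ngH': "\<not> good_cycle G Z H'"
  proof
    assume gc: "good_cycle G Z H'"
    then have scH': "simple_cycle_dg H'" and good: "\<forall>a\<in>arcs H'. good_arc G Z (fst a) (snd a)"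
      unfolding good_cycle_def by auto
    have odH: "out_degree H w \<ge> 1" if wH: "w \<in> verts H" for w
    proof -
      obtain e where "e \<in> arcs H" "tail H e = w" using strong_out_arc[OF wfH sH ntH wH] by blast
      then have "e \<in> out_arcs H w" by (simp add: out_arcs_def)
      then have "out_arcs H w \<noteq> {}" by blast
      then have "card (out_arcs H w) > 0" using fin_digraph.finite_out_arcs[OF finH, of w]
        by (simp add: card_gt_0_iff)
      then show ?thesis by (simp add: out_degree_def)
    qed
    obtain w where w: "w \<in> verts H" "out_degree H w \<noteq> 1"
    proof (rule ccontr)
      assume "\<not> thesis"
      then have all1: "\<forall>w\<in>verts H. out_degree H w = 1" using that by blast
      have "\<forall>v\<in>verts H. in_degree H v \<ge> 1"
      proof
        fix v assume v: "v \<in> verts H"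
        obtain e where "e \<in> arcs H" "head H e = v" using strong_in_arc[OF wfH sH ntH v] by blast
        then have "e \<in> in_arcs H v" by (simp add: in_arcs_def)
        then have "in_arcs H v \<noteq> {}" by blast
        then have "card (in_arcs H v) > 0" using fin_digraph.finite_in_arcs[OF finH, of v]
          by (simp add: card_gt_0_iff)
        then show "in_degree H v \<ge> 1" by (simp add: in_degree_def)
      qed
      then have "\<forall>v\<in>verts H. in_degree H v = 1" using out1_in1[OF finH all1] by blast
      then have "simple_cycle_dg H" using all1 sH finH unfolding simple_cycle_dg_def
        by (auto simp: fin_digraph_def fin_digraph_axioms_def)
      then show False using nscH by blast
    qed
    obtain a b where ab: "a \<in> arcs H" "b \<in> arcs H" "tail G a = w" "tail G b = w" "a \<noteq> b"
    proof (rule ccontr)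
      assume "\<not> thesis"
      then have "\<forall>a\<in>out_arcs H w. \<forall>b\<in>out_arcs H w. a = b" using that tH by (auto simp: out_arcs_def)
      moreover have "out_arcs H w \<noteq> {}" using odH[OF w(1)] by (auto simp: out_degree_def)
      ultimately obtain a0 where "out_arcs H w = {a0}" by blast
      then show False using w(2) by (simp add: out_degree_def)
    qed
    have "n \<rightarrow>\<^sup>*\<^bsub>H\<^esub> w" using sH nH w(1) unfolding strongly_connected_def by blast
    then obtain q where "H.awalk n q w" using H.reachable_awalk by blast
    then have "\<exists>u q2. u \<in> N \<and> H.awalk u q2 w \<and> (\<forall>e\<in>set q2. head H e \<notin> N)"
      using n by (rule H.walk_from_set)
    then obtain u q2 where u: "u \<in> N" "H.awalk u q2 w" "\<forall>e\<in>set q2. head G e \<notin> N"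
      unfolding tH by blast
    have key: "torso_path G Z u (q2 @ x # q1) v \<and> (u,v) \<in> arcs H'"
      if x: "x \<in> arcs H" "tail G x = w" "v \<in> N" "H.awalk (head G x) q1 v" "\<forall>e\<in>set q1. tail G e \<notin> N"
      for x q1 v
    proof -
      have Hx: "H.awalk w (x # q1) v" using x tH by (auto simp: H.awalk_Cons_iff)
      have HW: "H.awalk u (q2 @ x # q1) v" using u(2) Hx by (rule H.awalk_appendI)
      have W: "G.awalk u (q2 @ x # q1) v" using HW by (rule HG)
      have Gx: "G.awalk w (x # q1) v" using Hx by (rule HG)
      have "map (tail G) (tl (q2 @ x # q1)) = butlast (map (head G) (q2 @ x # q1))"
        using G.map_tail_tl[OF W] .
      also have "\<dots> = map (head G) q2 @ butlast (map (head G) (x # q1))"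
        by (simp add: butlast_append)
      also have "butlast (map (head G) (x # q1)) = map (tail G) q1"
        using G.map_tail_tl[OF Gx] by simp
      finally have it: "map (tail G) (tl (q2 @ x # q1)) = map (head G) q2 @ map (tail G) q1" .
      have s2: "set q2 \<subseteq> arcs H" and s1: "set q1 \<subseteq> arcs H" using u(2) x(4) by (auto simp: H.awalk_def)
      have int: "set (map (tail G) (tl (q2 @ x # q1))) \<subseteq> Z"
      proof
        fix y assume "y \<in> set (map (tail G) (tl (q2 @ x # q1)))"
        then have "y \<in> head G ` set q2 \<or> y \<in> tail G ` set q1" unfolding it by auto
        then have "y \<in> verts H \<and> y \<notin> N"
        proof
          assume "y \<in> head G ` set q2"
          then obtain f where f: "f \<in> set q2" "y = head G f" by blast
          then have "f \<in> arcs H" using s2 by blast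
          then have "y \<in> verts H" using f(2) H.head_in_verts tH(2) by metis
          then show ?thesis using f u(3) by blast
        next
          assume "y \<in> tail G ` set q1"
          then obtain f where f: "f \<in> set q1" "y = tail G f" by blast
          then have "f \<in> arcs H" using s1 by blast
          then have "y \<in> verts H" using f(2) H.tail_in_verts tH(1) by metis
          then show ?thesis using f x(5) by blast
        qed
        then show "y \<in> Z" using NZ by blast
      qed
      have uZ: "u \<notin> Z" and vZ: "v \<notin> Z" using u(1) x(3) N_def by auto
      have ne: "q2 @ x # q1 \<noteq> []" by simp
      obtain p where p: "torso_path G Z u p v" "set p \<subseteq> set (q2 @ x # q1)"
        "p = q2 @ x # q1 \<or> (\<exists>c. pre_digraph.cycle (G \<restriction> Z) c \<and> tail G ` set c \<inter> set (G.awalk_verts u p) \<noteq> {})"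
        using G.shortcut[OF W ne uZ vZ int] by blast
      have "set (q2 @ x # q1) \<subseteq> arcs H" using HW by (auto simp: H.awalk_def)
      then have uv: "(u,v) \<in> arcs H'" using p(1,2) u(1) x(3) H't by blast
      then have "good_arc G Z u v" using good by auto
      then have "\<forall>p. torso_path G Z u p v \<longrightarrow>
        \<not> (\<exists>c. pre_digraph.cycle (G \<restriction> Z) c \<and> tail G ` set c \<inter> set (G.awalk_verts u p) \<noteq> {})"
        unfolding good_arc_def by (rule conjunct2)
      then have "\<not> (\<exists>c. pre_digraph.cycle (G \<restriction> Z) c \<and> tail G ` set c \<inter> set (G.awalk_verts u p) \<noteq> {})"
        using p(1) by blast
      then have "p = q2 @ x # q1" using p(3) by blast
      then show ?thesis using p(1) uv by simp
    qed
    obtain q1a va where pa: "va \<in> N" "H.awalk (head G a) q1a va" "\<forall>e\<in>set q1a. tail G e \<notin> N"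
      using post[OF ab(1)] by blast
    obtain q1b vb where pb: "vb \<in> N" "H.awalk (head G b) q1b vb" "\<forall>e\<in>set q1b. tail G e \<notin> N"
      using post[OF ab(2)] by blast
    note ka = key[OF ab(1) ab(3) pa] and kb = key[OF ab(2) ab(4) pb]
    have neq: "q2 @ a # q1a \<noteq> q2 @ b # q1b" using ab(5) by simp
    show False
    proof (cases "va = vb")
      case True
      then have "good_arc G Z u va" using good ka by auto
      then have "\<exists>!p. torso_path G Z u p va" unfolding good_arc_def by (rule conjunct1)
      then obtain p0 where "\<forall>y. torso_path G Z u y va \<longrightarrow> y = p0" by (elim ex1E) blast
      then have "q2 @ a # q1a = p0" "q2 @ b # q1b = p0" using ka kb True by auto
      then show False using neq by simp
    next
      case False
      have "(u,va) \<in> arcs H'" "(u,vb) \<in> arcs H'" using ka kb by blast+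
      then have "{(u,va),(u,vb)} \<subseteq> out_arcs H' u" using H't(2) by (simp add: out_arcs_def)
      moreover have "finite (out_arcs H' u)" using fin_digraph.finite_out_arcs[OF finH'] .
      ultimately have "card {(u,va),(u,vb)} \<le> out_degree H' u" unfolding out_degree_def by (intro card_mono)
      moreover have "out_degree H' u = 1" using scH' u(1) H't unfolding simple_cycle_dg_def by auto
      ultimately show False using False by simp
    qed
  qed
  have "in_Fbad G Z (del_verts (torso G Z) S) H'"
    unfolding in_Fbad_def using subH' sH' ntH' ngH' by (intro conjI)
  then show ?thesis unfolding contains_Fbad_def by (rule exI)
qed


theorem lemma6:
  fixes G :: "('a,'b) pre_digraph" and k :: nat and T Z S :: "'a set"
  assumes "fin_digraph G"
    and "T \<subseteq> verts G" and "card T \<le> k + 1"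
    and "\<forall>C \<in> pre_digraph.sccs (del_verts G T). \<not> trivial_dg C \<longrightarrow> one_out_regular C"
    and "Z \<subseteq> verts G - T"
    and "\<not> contains_F (G \<restriction> (Z \<union> T))"
    and "S \<subseteq> verts G - (Z \<union> T)"
  shows "contains_F (del_verts G S) \<longleftrightarrow> contains_Fbad G Z (del_verts (torso G Z) S)"
proof
  have Zv: "Z \<subseteq> verts G" using assms(5) by blast
  have SZ: "S \<inter> Z = {}" using assms(7) by blast
  {
    assume "contains_F (del_verts G S)"
    then obtain H where "in_F (del_verts G S) H" unfolding contains_F_def by blast
    then show "contains_Fbad G Z (del_verts (torso G Z) S)"
      using dir1[OF assms(1) Zv assms(6)] by blast
  }
  {
    assume "contains_Fbad G Z (del_verts (torso G Z) S)"
    then obtain H' where "in_Fbad G Z (del_verts (torso G Z) S) H'" unfolding contains_Fbad_def by blast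
    then show "contains_F (del_verts G S)"
      using dir2[OF assms(1) Zv SZ] by blast
  }
qed

end
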